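(* Let $\mathcal F,\mathcal G$ be weighted species with $f_n=[z^n]\mathcal F(z)>0$ and $g_n=[z^n]\mathcal G(z)>0$ for all large $n$. Suppose $\rho:=\rho_{\mathcal G}\in(0,\infty)$ is the radius of convergence of $\mathcal G(z)$, $g_n/g_{n+1}\to\rho$, $\frac1{g_n}\sum_{i+j=n}g_ig_j\to2\mathcal G(\rho)<\infty$, and $f_n/g_n\to\lambda$ for a constant $0<\lambda<\infty$. Let $\mathsf S_n$ be an $n$-sized $\mathcal F\mathcal G$-structure drawn with probability proportional to its weight. Then $$[z^n]\mathcal F(z)\mathcal G(z)\sim\mathcal F(\rho)g_n+\mathcal G(\rho)f_n,$$ and $d_{\mathrm{TV}}(\mathsf S_n,\hat{\mathsf S}_n)\to0$, where $\hat{\mathsf S}_n$ is constructed as follows. Set $p=\mathcal F(\rho)/(\mathcal F(\rho)+\lambda\mathcal G(\rho))$ and flip a coin showing heads with probability $p$. If heads: sample a Boltzmann $\mathcal F$-object $\mathsf F$ with parameter $\rho$; if $|\mathsf F|\le n$ and $g_{n-|\mathsf F|}>0$, let $\hat{\mathsf S}_n$ be the $\mathcal F\mathcal G$-structure with $\mathcal F$-component $\mathsf F$ (placed on a uniformly random $|\mathsf F|$-subset of $\{1,\dots,n\}$) and a $\mathcal G$-component on the remaining $n-|\mathsf F|$ labels drawn with probability proportional to its weight; otherwise set $\hat{\mathsf S}_n=\diamond$ (a placeholder). If tails: symmetrically sample a Boltzmann $\mathcal G$-object $\mathsf G$ with parameter $\rho$, and if $|\mathsf G|\le n$ and $f_{n-|\mathsf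 G|}>0$ complete it with a weight-proportionally drawn $\mathcal F$-component on the remaining $n-|\mathsf G|$ labels; otherwise $\hat{\mathsf S}_n=\diamond$.
   Context: A weighted species $\mathcal F$ assigns to each finite set $U$ a finite set $\mathcal F[U]$ of weighted structures, compatibly with relabelling; $[z^n]\mathcal F(z)$ is $1/n!$ times the total weight of $\mathcal F[\{1,\dots,n\}]$. An $\mathcal F\mathcal G$-structure on $U$ is a pair ($\mathcal F$-structure on $U_1$, $\mathcal G$-structure on $U_2$) with $U=U_1\sqcup U_2$ and product weight. For $\rho>0$ with $\mathcal F(\rho)<\infty$, the Boltzmann distribution with parameter $\rho$ selects $F\in\mathcal F[\{1,\dots,m\}]$ with probability $\omega(F)\rho^m/(m!\,\mathcal F(\rho))$. $d_{\mathrm{TV}}$ denotes total variation distance. *)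

theory Defs
  imports "HOL-Analysis.Analysis" "HOL-Probability.Probability_Mass_Function"
    "HOL-Library.Landau_Symbols"
begin

text \<open>A weighted species, with labels drawn from finite sets of natural numbers.
  structs U = set of structures on the label set U, weight = weight of a structure,
  relabel sigma x = transport of a structure x along a bijection sigma.\<close>

record 'a wspecies =
  structs :: "nat set \<Rightarrow> 'a set"
  weight  :: "'a \<Rightarrow> real"
  relabel :: "(nat \<Rightarrow> nat) \<Rightarrow> 'a \<Rightarrow> 'a"

definition is_wspecies :: "'a wspecies \<Rightarrow> bool" where
  "is_wspecies S \<longleftrightarrow>
     (\<forall>U. finite U \<longrightarrow> finite (structs S U)) \<and>
     (\<forall>U. finite U \<longrightarrow> (\<forall>x\<in>structs S U. weight S x \<ge> 0)) \<and>
     (\<forall>\<sigma> U V x. finite U \<longrightarrow> bij_betw \<sigma> U V \<longrightarrow> x \<in> structs S U \<longrightarrow>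
         relabel S \<sigma> x \<in> structs S V \<and> weight S (relabel S \<sigma> x) = weight S x) \<and>
     (\<forall>\<sigma> U x. finite U \<longrightarrow> x \<in> structs S U \<longrightarrow> (\<forall>i\<in>U. \<sigma> i = i) \<longrightarrow>
         relabel S \<sigma> x = x) \<and>
     (\<forall>\<sigma> \<tau> U V W x. finite U \<longrightarrow> bij_betw \<sigma> U V \<longrightarrow> bij_betw \<tau> V W \<longrightarrow>
         x \<in> structs S U \<longrightarrow> relabel S \<tau> (relabel S \<sigma> x) = relabel S (\<tau> \<circ> \<sigma>) x)"

definition sp_coeff :: "'a wspecies \<Rightarrow> nat \<Rightarrow> real" where
  "sp_coeff S n = (\<Sum>x\<in>structs S {1..n}. weight S x) / fact n"

definition sp_val :: "'a wspecies \<Rightarrow> real \<Rightarrow> real" where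
  "sp_val S r = (\<Sum>n. sp_coeff S n * r ^ n)"

definition prod_structs :: "'a wspecies \<Rightarrow> 'b wspecies \<Rightarrow> nat set \<Rightarrow> (nat set \<times> 'a \<times> 'b) set" where
  "prod_structs F G U =
     {(U1, x, y). U1 \<subseteq> U \<and> x \<in> structs F U1 \<and> y \<in> structs G (U - U1)}"

definition prod_weight :: "'a wspecies \<Rightarrow> 'b wspecies \<Rightarrow> nat set \<times> 'a \<times> 'b \<Rightarrow> real" where
  "prod_weight F G s = weight F (fst (snd s)) * weight G (snd (snd s))"

definition prod_coeff :: "'a wspecies \<Rightarrow> 'b wspecies \<Rightarrow> nat \<Rightarrow> real" where
  "prod_coeff F G n = (\<Sum>s\<in>prod_structs F G {1..n}. prod_weight F G s) / fact n"

definition weighted_pmf :: "'c set \<Rightarrow> ('c \<Rightarrow> real) \<Rightarrow> 'c pmf" where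
  "weighted_pmf A w = embed_pmf (\<lambda>x. if x \<in> A then w x / (\<Sum>y\<in>A. w y) else 0)"

definition boltzmann :: "'a wspecies \<Rightarrow> real \<Rightarrow> (nat \<times> 'a) pmf" where
  "boltzmann S r = embed_pmf (\<lambda>(m, x).
      if x \<in> structs S {1..m} then weight S x * r ^ m / (fact m * sp_val S r) else 0)"

definition place :: "nat set \<Rightarrow> nat \<Rightarrow> nat" where
  "place U = (\<lambda>i. sorted_list_of_set U ! (i - 1))"

definition S_rand :: "'a wspecies \<Rightarrow> 'b wspecies \<Rightarrow> nat \<Rightarrow> (nat set \<times> 'a \<times> 'b) pmf" where
  "S_rand F G n = weighted_pmf (prod_structs F G {1..n}) (prod_weight F G)"

text \<open>The approximation hat S_n; None plays the role of the placeholder.\<close>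
definition S_hat :: "'a wspecies \<Rightarrow> 'b wspecies \<Rightarrow> real \<Rightarrow> real \<Rightarrow> nat \<Rightarrow>
    (nat set \<times> 'a \<times> 'b) option pmf" where
  "S_hat F G \<rho> lam n =
    bind_pmf (bernoulli_pmf (sp_val F \<rho> / (sp_val F \<rho> + lam * sp_val G \<rho>))) (\<lambda>heads.
      if heads then
        bind_pmf (boltzmann F \<rho>) (\<lambda>(m, x).
          if m \<le> n \<and> sp_coeff G (n - m) > 0 then
            bind_pmf (pmf_of_set {U. U \<subseteq> {1..n} \<and> card U = m}) (\<lambda>U.
              bind_pmf (weighted_pmf (structs G ({1..n} - U)) (weight G)) (\<lambda>y.
                return_pmf (Some (U, relabel F (place U) x, y))))
          else return_pmf None)
      else
        bind_pmf (boltzmann G \<rho>) (\<lambda>(m, y).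
          if m \<le> n \<and> sp_coeff F (n - m) > 0 then
            bind_pmf (pmf_of_set {V. V \<subseteq> {1..n} \<and> card V = m}) (\<lambda>V.
              bind_pmf (weighted_pmf (structs F ({1..n} - V)) (weight F)) (\<lambda>x.
                return_pmf (Some ({1..n} - V, x, relabel G (place V) y))))
          else return_pmf None))"

definition tv_dist :: "'c pmf \<Rightarrow> 'c pmf \<Rightarrow> real" where
  "tv_dist p q = (SUP A. \<bar>measure_pmf.prob p A - measure_pmf.prob q A\<bar>)"

end

theory Submission
  imports Defs
begin

lemma ws_fin: assumes "is_wspecies S" "finite U" shows "finite (structs S U)"
  using assms(1)[unfolded is_wspecies_def, THEN conjunct1, rule_format, OF assms(2)] .
lemma ws_nonneg: assumes "is_wspecies S" "finite U" "x \<in> structs S U" shows "weight S x \<ge> 0"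
  using assms(1)[unfolded is_wspecies_def, THEN conjunct2, THEN conjunct1, rule_format, OF assms(2,3)] .
lemma ws_relabel: assumes "is_wspecies S" "finite U" "bij_betw \<sigma> U V" "x \<in> structs S U"
  shows "relabel S \<sigma> x \<in> structs S V \<and> weight S (relabel S \<sigma> x) = weight S x"
  using assms(1)[unfolded is_wspecies_def, THEN conjunct2, THEN conjunct2, THEN conjunct1, rule_format, OF assms(2,3,4)] .
lemma ws_id: assumes "is_wspecies S" "finite U" "x \<in> structs S U" "\<And>i. i \<in> U \<Longrightarrow> \<sigma> i = i"
  shows "relabel S \<sigma> x = x"
  using assms(1)[unfolded is_wspecies_def, THEN conjunct2, THEN conjunct2, THEN conjunct2, THEN conjunct1, rule_format, OF assms(2,3,4)] .
lemma ws_comp: assumes "is_wspecies S" "finite U" "bij_betw \<sigma> U V" "bij_betw \<tau> V W" "x \<in> structs S U"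
  shows "relabel S \<tau> (relabel S \<sigma> x) = relabel S (\<tau> \<circ> \<sigma>) x"
  using assms(1)[unfolded is_wspecies_def, THEN conjunct2, THEN conjunct2, THEN conjunct2, THEN conjunct2, rule_format, OF assms(2,3,4,5)] .
lemma relabel_bij:
  assumes S: "is_wspecies S" and U: "finite U" and b: "bij_betw \<sigma> U V"
  shows "bij_betw (relabel S \<sigma>) (structs S U) (structs S V)"
proof -
  define \<tau> where "\<tau> = inv_into U \<sigma>"
  have b2: "bij_betw \<tau> V U" unfolding \<tau>_def using b by (rule bij_betw_inv_into)
  have V: "finite V" using b U bij_betw_finite by blast
  show ?thesis
  proof (rule bij_betw_byWitness[where f'="relabel S \<tau>"])
    show "\<forall>a\<in>structs S U. relabel S \<tau> (relabel S \<sigma> a) = a"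
    proof
      fix a assume a: "a \<in> structs S U"
      have "relabel S \<tau> (relabel S \<sigma> a) = relabel S (\<tau> \<circ> \<sigma>) a" using ws_comp[OF S U b b2 a] .
      also have "\<dots> = a"
      proof (rule ws_id[OF S U a])
        fix i assume "i \<in> U" then show "(\<tau> \<circ> \<sigma>) i = i"
          using b unfolding \<tau>_def bij_betw_def by (simp add: inv_into_f_f)
      qed
      finally show "relabel S \<tau> (relabel S \<sigma> a) = a" .
    qed
    show "\<forall>a'\<in>structs S V. relabel S \<sigma> (relabel S \<tau> a') = a'"
    proof
      fix a assume a: "a \<in> structs S V"
      have "relabel S \<sigma> (relabel S \<tau> a) = relabel S (\<sigma> \<circ> \<tau>) a" using ws_comp[OF S V b2 b a] .
      also have "\<dots> = a"
      proof (rule ws_id[OF S V a])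
        fix i assume "i \<in> V" then show "(\<sigma> \<circ> \<tau>) i = i"
          using b unfolding \<tau>_def bij_betw_def by (simp add: f_inv_into_f)
      qed
      finally show "relabel S \<sigma> (relabel S \<tau> a) = a" .
    qed
    show "relabel S \<sigma> ` structs S U \<subseteq> structs S V" using ws_relabel[OF S U b] by blast
    show "relabel S \<tau> ` structs S V \<subseteq> structs S U" using ws_relabel[OF S V b2] by blast
  qed
qed

lemma relabel_weight:
  assumes S: "is_wspecies S" and U: "finite U" and b: "bij_betw \<sigma> U V" and x: "x \<in> structs S U"
  shows "weight S (relabel S \<sigma> x) = weight S x" "relabel S \<sigma> x \<in> structs S V"
  using ws_relabel[OF assms] by auto

lemma sum_weight_bij:
  assumes S: "is_wspecies S" and U: "finite U" and b: "bij_betw \<sigma> U V"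
  shows "sum (weight S) (structs S U) = sum (weight S) (structs S V)"
proof -
  have "sum (weight S) (structs S V) = sum (weight S \<circ> relabel S \<sigma>) (structs S U)"
    using sum.reindex_bij_betw[OF relabel_bij[OF S U b], of "weight S"] by (simp add: comp_def)
  also have "\<dots> = sum (weight S) (structs S U)"
    by (rule sum.cong) (auto simp: relabel_weight[OF S U b])
  finally show ?thesis by simp
qed

lemma place_bij:
  assumes U: "finite U"
  shows "bij_betw (place U) {1..card U} U"
proof -
  let ?xs = "sorted_list_of_set U"
  have d: "distinct ?xs" and l: "length ?xs = card U" and s: "set ?xs = U" using U by auto
  show ?thesis unfolding bij_betw_def
  proof
    show "inj_on (place U) {1..card U}" unfolding inj_on_def place_def
    proof (intro ballI impI)
      fix i j assume i: "i \<in> {1..card U}" and j: "j \<in> {1..card U}" and e: "?xs ! (i - 1) = ?xs ! (j - 1)"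
      have "i - 1 = j - 1" using nth_eq_iff_index_eq[OF d, of "i - 1" "j - 1"] e i j l by auto
      then show "i = j" using i j by auto
    qed
    show "place U ` {1..card U} = U"
    proof
      show "place U ` {1..card U} \<subseteq> U"
      proof
        fix u assume "u \<in> place U ` {1..card U}"
        then obtain i where i: "i \<in> {1..card U}" "u = ?xs ! (i - 1)" unfolding place_def by auto
        then have "i - 1 < length ?xs" using l by auto
        then show "u \<in> U" using i s nth_mem by blast
      qed
      show "U \<subseteq> place U ` {1..card U}"
      proof
        fix u assume "u \<in> U"
        then obtain i where i: "i < length ?xs" "?xs ! i = u" using s by (metis in_set_conv_nth)
        then have "place U (Suc i) = u" "Suc i \<in> {1..card U}" unfolding place_def using l by auto
        then show "u \<in> place U ` {1..card U}" by force
      qed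
    qed
  qed
qed

lemma sum_weight_card:
  assumes S: "is_wspecies S" and U: "finite U"
  shows "sum (weight S) (structs S U) = fact (card U) * sp_coeff S (card U)"
  using sum_weight_bij[OF S _ place_bij[OF U]] unfolding sp_coeff_def by simp

lemma sp_coeff_nonneg:
  assumes S: "is_wspecies S" shows "sp_coeff S n \<ge> 0"
  unfolding sp_coeff_def by (intro sum_nonneg divide_nonneg_nonneg) (auto intro: ws_nonneg[OF S])

lemma sum_pow_card:
  assumes A: "finite A"
  shows "(\<Sum>B\<in>Pow A. (h (card B) :: real)) = (\<Sum>k\<le>card A. real (card A choose k) * h k)"
proof -
  have "(\<Sum>B\<in>Pow A. h (card B)) = (\<Sum>k\<le>card A. sum (\<lambda>B. h (card B)) {B \<in> Pow A. card B = k})"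
  proof (rule sum.group[symmetric])
    show "finite (Pow A)" using A by simp
    show "finite {..card A}" by simp
    show "card ` Pow A \<subseteq> {..card A}" using A by (auto intro: card_mono)
  qed
  also have "\<dots> = (\<Sum>k\<le>card A. real (card A choose k) * h k)"
  proof (rule sum.cong)
    fix k assume "k \<in> {..card A}"
    have "sum (\<lambda>B. h (card B)) {B \<in> Pow A. card B = k} = sum (\<lambda>B. h k) {B \<in> Pow A. card B = k}"
      by (rule sum.cong) auto
    also have "\<dots> = real (card {B. B \<subseteq> A \<and> card B = k}) * h k" by simp
    also have "\<dots> = real (card A choose k) * h k" using n_subsets[OF A] by simp
    finally show "sum (\<lambda>B. h (card B)) {B \<in> Pow A. card B = k} = real (card A choose k) * h k" .
  qed simp
  finally show ?thesis .
qed

lemma prod_sum: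
  assumes F: "is_wspecies F" and G: "is_wspecies G"
  shows "(\<Sum>s\<in>prod_structs F G {1..n}. if Q (card (fst s)) then prod_weight F G s else 0)
     = fact n * (\<Sum>k\<le>n. if Q k then sp_coeff F k * sp_coeff G (n - k) else 0)"
proof -
  have eq: "prod_structs F G {1..n} = Sigma (Pow {1..n}) (\<lambda>U1. structs F U1 \<times> structs G ({1..n} - U1))"
    unfolding prod_structs_def by auto
  have fin: "\<And>U. finite U \<Longrightarrow> finite (structs F U)" "\<And>U. finite U \<Longrightarrow> finite (structs G U)"
    using ws_fin[OF F] ws_fin[OF G] by auto
  have "(\<Sum>s\<in>prod_structs F G {1..n}. if Q (card (fst s)) then prod_weight F G s else 0)
     = (\<Sum>U1\<in>Pow {1..n}. \<Sum>p\<in>structs F U1 \<times> structs G ({1..n} - U1).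
          if Q (card U1) then weight F (fst p) * weight G (snd p) else 0)"
    unfolding eq prod_weight_def
    by (subst sum.Sigma) (auto intro!: finite_subset[OF _ finite_atLeastAtMost] fin simp: case_prod_beta)
  also have "\<dots> = (\<Sum>U1\<in>Pow {1..n}. if Q (card U1) then
       sum (weight F) (structs F U1) * sum (weight G) (structs G ({1..n} - U1)) else 0)"
    by (rule sum.cong) (auto simp: sum_product sum.cartesian_product case_prod_beta)
  also have "\<dots> = (\<Sum>U1\<in>Pow {1..n}. if Q (card U1) then
       fact (card U1) * sp_coeff F (card U1) * (fact (n - card U1) * sp_coeff G (n - card U1)) else 0)"
  proof (rule sum.cong)
    fix U1 assume "U1 \<in> Pow {1..n}"
    then have U1: "U1 \<subseteq> {1..n}" "finite U1" by (auto intro: finite_subset)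
    have c: "card ({1..n} - U1) = n - card U1" using U1 by (simp add: card_Diff_subset)
    show "(if Q (card U1) then sum (weight F) (structs F U1) * sum (weight G) (structs G ({1..n} - U1)) else 0)
      = (if Q (card U1) then fact (card U1) * sp_coeff F (card U1) * (fact (n - card U1) * sp_coeff G (n - card U1)) else 0)"
      using sum_weight_card[OF F U1(2)] sum_weight_card[OF G, of "{1..n} - U1"] c by simp
  qed simp
  also have "\<dots> = (\<Sum>k\<le>n. real (n choose k) * (if Q k then
       fact k * sp_coeff F k * (fact (n - k) * sp_coeff G (n - k)) else 0))"
    using sum_pow_card[of "{1..n}" "\<lambda>k. if Q k then fact k * sp_coeff F k * (fact (n - k) * sp_coeff G (n - k)) else 0"]
    by (simp only: finite_atLeastAtMost card_atLeastAtMost diff_Suc_1)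
  also have "\<dots> = (\<Sum>k\<le>n. fact n * (if Q k then sp_coeff F k * sp_coeff G (n - k) else 0))"
  proof (rule sum.cong)
    fix k assume "k \<in> {..n}"
    then have "fact k * fact (n - k) * real (n choose k) = (fact n :: real)"
      using binomial_fact_lemma[of k n] by (metis atMost_iff of_nat_fact of_nat_mult)
    then show "real (n choose k) * (if Q k then fact k * sp_coeff F k * (fact (n - k) * sp_coeff G (n - k)) else 0)
       = fact n * (if Q k then sp_coeff F k * sp_coeff G (n - k) else 0)"
      by (auto simp: algebra_simps)
  qed simp
  finally show ?thesis by (simp add: sum_distrib_left)
qed


lemma pmf_bind_ge: "pmf N y * pmf (f y) i \<le> pmf (bind_pmf N f) i"
proof -
  have "ennreal (pmf N y * pmf (f y) i) = (\<integral>\<^sup>+x. ennreal (pmf N y * pmf (f y) i) * indicator {y} x \<partial>count_space UNIV)"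
    by (simp add: nn_integral_cmult_indicator)
  also have "\<dots> \<le> (\<integral>\<^sup>+x. ennreal (pmf N x) * ennreal (pmf (f x) i) \<partial>count_space UNIV)"
    by (intro nn_integral_mono) (auto split: split_indicator simp: ennreal_mult)
  also have "\<dots> = ennreal (pmf (bind_pmf N f) i)"
    by (simp add: ennreal_pmf_bind nn_integral_measure_pmf)
  finally show ?thesis by (simp add: ennreal_le_iff)
qed

lemma nn_integral_finite_support:
  assumes "finite A" "\<And>x. x \<notin> A \<Longrightarrow> f x = 0"
  shows "(\<integral>\<^sup>+x. ennreal (f x) \<partial>count_space UNIV) = (\<Sum>x\<in>A. ennreal (f x))"
proof -
  have "(\<integral>\<^sup>+x. ennreal (f x) \<partial>count_space UNIV) = (\<integral>\<^sup>+x. ennreal (f x) * indicator A x \<partial>count_space UNIV)"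
    by (intro nn_integral_cong) (auto split: split_indicator simp: assms(2))
  also have "\<dots> = (\<integral>\<^sup>+x. ennreal (f x) \<partial>count_space A)"
    by (simp add: nn_integral_count_space_indicator)
  also have "\<dots> = (\<Sum>x\<in>A. ennreal (f x))"
    using assms(1) by (simp add: nn_integral_count_space_finite)
  finally show ?thesis .
qed

lemma pmf_weighted:
  assumes A: "finite A" and w: "\<And>x. x \<in> A \<Longrightarrow> w x \<ge> 0" and pos: "(\<Sum>y\<in>A. w y) > 0"
  shows "pmf (weighted_pmf A w) x = (if x \<in> A then w x / (\<Sum>y\<in>A. w y) else 0)"
  unfolding weighted_pmf_def
proof (rule pmf_embed_pmf)
  show "\<And>x. 0 \<le> (if x \<in> A then w x / sum w A else 0)" using w pos by auto
  have "(\<integral>\<^sup>+x. ennreal (if x \<in> A then w x / sum w A else 0) \<partial>count_space UNIV)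
       = (\<Sum>x\<in>A. ennreal (if x \<in> A then w x / sum w A else 0))"
    by (rule nn_integral_finite_support[OF A]) auto
  also have "\<dots> = ennreal (\<Sum>x\<in>A. w x / sum w A)"
    using w pos by (subst sum_ennreal) auto
  also have "\<dots> = 1" using pos by (simp add: sum_divide_distrib[symmetric])
  finally show "(\<integral>\<^sup>+x. ennreal (if x \<in> A then w x / sum w A else 0) \<partial>count_space UNIV) = 1" .
qed


lemma pmf_boltzmann:
  assumes S: "is_wspecies S" and r: "0 \<le> r" and sm: "summable (\<lambda>n. sp_coeff S n * r ^ n)"
    and pos: "sp_val S r > 0"
  shows "pmf (boltzmann S r) (m, x) =
    (if x \<in> structs S {1..m} then weight S x * r ^ m / (fact m * sp_val S r) else 0)"
proof -
  define f where "f = (\<lambda>(m::nat, x). if x \<in> structs S {1..m} then weight S x * r ^ m / (fact m * sp_val S r) else 0)"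
  have f0: "\<And>z. 0 \<le> f z" unfolding f_def using r pos
    by (auto intro!: divide_nonneg_pos mult_nonneg_nonneg intro: ws_nonneg[OF S finite_atLeastAtMost])
  have "(\<integral>\<^sup>+z. ennreal (f z) \<partial>count_space UNIV) = 1"
  proof -
    define g where "g = (\<lambda>k z. ennreal (if fst z = k then f z else 0))"
    have "(\<integral>\<^sup>+z. ennreal (f z) \<partial>count_space UNIV) = (\<integral>\<^sup>+z. (\<Sum>k. g k z) \<partial>count_space UNIV)"
    proof (rule nn_integral_cong)
      fix z :: "nat \<times> 'a"
      have "(\<Sum>k. g k z) = sum (\<lambda>k. g k z) {fst z}"
        by (rule suminf_finite) (auto simp: g_def)
      then show "ennreal (f z) = (\<Sum>k. g k z)" by (simp add: g_def)
    qed
    also have "\<dots> = (\<Sum>k. \<integral>\<^sup>+z. g k z \<partial>count_space UNIV)"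
      by (rule nn_integral_suminf) simp
    also have "\<dots> = (\<Sum>k. ennreal (sp_coeff S k * r ^ k / sp_val S r))"
    proof (rule suminf_cong)
      fix k
      have fin: "finite ({k} \<times> structs S {1..k})" using ws_fin[OF S] by simp
      have "(\<integral>\<^sup>+z. g k z \<partial>count_space UNIV) = (\<Sum>z\<in>{k} \<times> structs S {1..k}. ennreal (if fst z = k then f z else 0))"
        unfolding g_def by (rule nn_integral_finite_support[OF fin]) (auto simp: f_def split: if_splits)
      also have "\<dots> = ennreal (\<Sum>z\<in>{k} \<times> structs S {1..k}. (if fst z = k then f z else 0))"
        using f0 by (subst sum_ennreal) auto
      also have "(\<Sum>z\<in>{k} \<times> structs S {1..k}. (if fst z = k then f z else 0))
          = (\<Sum>x\<in>structs S {1..k}. weight S x * r ^ k / (fact k * sp_val S r))"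
      proof -
        have e: "{k} \<times> structs S {1..k} = Pair k ` structs S {1..k}" by auto
        show ?thesis unfolding e by (subst sum.reindex) (auto simp: inj_on_def f_def)
      qed
      also have "\<dots> = sp_coeff S k * r ^ k / sp_val S r"
        unfolding sp_coeff_def by (simp add: sum_divide_distrib[symmetric] sum_distrib_right[symmetric] field_simps)
      finally show "(\<integral>\<^sup>+z. g k z \<partial>count_space UNIV) = ennreal (sp_coeff S k * r ^ k / sp_val S r)" .
    qed
    also have "\<dots> = ennreal (\<Sum>k. sp_coeff S k * r ^ k / sp_val S r)"
      by (rule suminf_ennreal2) (use sp_coeff_nonneg[OF S] r pos in \<open>auto intro!: summable_divide sm divide_nonneg_pos\<close>)
    also have "\<dots> = 1" using pos sm unfolding sp_val_def by (simp add: suminf_divide)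
    finally show ?thesis .
  qed
  then have "pmf (embed_pmf f) (m, x) = f (m, x)" using f0 by (intro pmf_embed_pmf) auto
  then show ?thesis unfolding boltzmann_def f_def by simp
qed


lemma tv_lower:
  fixes P Q :: "'c pmf"
  assumes fin: "finite Gd" and e: "0 \<le> \<epsilon>" and mass: "(\<Sum>x\<in>Gd. pmf P x) \<ge> 1 - \<epsilon>"
    and lb: "\<And>x. x \<in> Gd \<Longrightarrow> pmf Q x \<ge> (1 - \<epsilon>) * pmf P x"
  shows "measure_pmf.prob Q A \<ge> measure_pmf.prob P A - 2 * \<epsilon>"
proof -
  have PG: "measure_pmf.prob P Gd = (\<Sum>x\<in>Gd. pmf P x)" using fin by (rule measure_measure_pmf_finite)
  have "measure_pmf.prob P (UNIV - Gd) = 1 - measure_pmf.prob P Gd"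
    using measure_pmf.prob_compl[of Gd P] by simp
  then have c: "measure_pmf.prob P (UNIV - Gd) \<le> \<epsilon>" using PG mass by simp
  have fA: "finite (A \<inter> Gd)" using fin by simp
  have "measure_pmf.prob P A \<le> measure_pmf.prob P ((A \<inter> Gd) \<union> (UNIV - Gd))"
    by (rule measure_pmf.finite_measure_mono) auto
  also have "\<dots> \<le> measure_pmf.prob P (A \<inter> Gd) + measure_pmf.prob P (UNIV - Gd)"
    by (rule measure_subadditive) auto
  finally have 1: "measure_pmf.prob P A \<le> (\<Sum>x\<in>A \<inter> Gd. pmf P x) + \<epsilon>"
    using c measure_measure_pmf_finite[OF fA, of P] by simp
  have s1: "(\<Sum>x\<in>A \<inter> Gd. pmf P x) \<le> 1"
    using measure_measure_pmf_finite[OF fA, of P] measure_pmf.prob_le_1[of P "A \<inter> Gd"] by simp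
  have "(1 - \<epsilon>) * (\<Sum>x\<in>A \<inter> Gd. pmf P x) \<le> (\<Sum>x\<in>A \<inter> Gd. pmf Q x)"
    unfolding sum_distrib_left by (rule sum_mono) (use lb in auto)
  also have "\<dots> = measure_pmf.prob Q (A \<inter> Gd)" using measure_measure_pmf_finite[OF fA, of Q] by simp
  also have "\<dots> \<le> measure_pmf.prob Q A" by (rule measure_pmf.finite_measure_mono) auto
  finally have 2: "(1 - \<epsilon>) * (\<Sum>x\<in>A \<inter> Gd. pmf P x) \<le> measure_pmf.prob Q A" .
  have "(\<Sum>x\<in>A \<inter> Gd. pmf P x) - \<epsilon> \<le> (1 - \<epsilon>) * (\<Sum>x\<in>A \<inter> Gd. pmf P x)"
    using s1 e by (simp add: algebra_simps mult_left_le)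
  then show ?thesis using 1 2 by linarith
qed

lemma tv_bound:
  fixes P Q :: "'c pmf"
  assumes fin: "finite Gd" and e: "0 \<le> \<epsilon>" and mass: "(\<Sum>x\<in>Gd. pmf P x) \<ge> 1 - \<epsilon>"
    and lb: "\<And>x. x \<in> Gd \<Longrightarrow> pmf Q x \<ge> (1 - \<epsilon>) * pmf P x"
  shows "tv_dist P Q \<le> 2 * \<epsilon>"
  unfolding tv_dist_def
proof (rule cSUP_least)
  fix A :: "'c set"
  have a: "measure_pmf.prob Q A \<ge> measure_pmf.prob P A - 2 * \<epsilon>" by (rule tv_lower[OF assms])
  have b: "measure_pmf.prob Q (UNIV - A) \<ge> measure_pmf.prob P (UNIV - A) - 2 * \<epsilon>" by (rule tv_lower[OF assms])
  have "measure_pmf.prob Q (UNIV - A) = 1 - measure_pmf.prob Q A"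
    using measure_pmf.prob_compl[of A Q] by simp
  moreover have "measure_pmf.prob P (UNIV - A) = 1 - measure_pmf.prob P A"
    using measure_pmf.prob_compl[of A P] by simp
  ultimately show "\<bar>measure_pmf.prob P A - measure_pmf.prob Q A\<bar> \<le> 2 * \<epsilon>" using a b by linarith
qed simp

lemma tv_nonneg: "tv_dist P Q \<ge> 0"
  unfolding tv_dist_def
proof (rule cSUP_upper2[where x="{}"])
  show "bdd_above (range (\<lambda>A. \<bar>measure_pmf.prob P A - measure_pmf.prob Q A\<bar>))"
  proof (rule bdd_aboveI[where M=1])
    fix y assume "y \<in> range (\<lambda>A. \<bar>measure_pmf.prob P A - measure_pmf.prob Q A\<bar>)"
    then obtain A where "y = \<bar>measure_pmf.prob P A - measure_pmf.prob Q A\<bar>" by auto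
    then show "y \<le> 1" using measure_pmf.prob_le_1[of P A] measure_pmf.prob_le_1[of Q A]
      measure_nonneg[of P A] measure_nonneg[of Q A] by linarith
  qed
qed auto


lemma branch_lb:
  fixes A :: "'a wspecies" and B :: "'b wspecies" and \<phi> :: "nat set \<Rightarrow> 'a \<Rightarrow> 'b \<Rightarrow> 'c"
  assumes SA: "is_wspecies A" and SB: "is_wspecies B" and r: "0 \<le> \<rho>"
    and sm: "summable (\<lambda>k. sp_coeff A k * \<rho> ^ k)" and pos: "0 < sp_val A \<rho>"
    and U: "U \<subseteq> {1..n}" and a: "a \<in> structs A U" and b: "b \<in> structs B ({1..n} - U)"
    and gp: "sp_coeff B (n - card U) > 0"
  shows "weight A a * weight B b * \<rho> ^ card U / (sp_val A \<rho> * fact n * sp_coeff B (n - card U))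
     \<le> pmf (bind_pmf (boltzmann A \<rho>) (\<lambda>(m, x).
          if m \<le> n \<and> sp_coeff B (n - m) > 0 then
            bind_pmf (pmf_of_set {U. U \<subseteq> {1..n} \<and> card U = m}) (\<lambda>U.
              bind_pmf (weighted_pmf (structs B ({1..n} - U)) (weight B)) (\<lambda>y.
                return_pmf (Some (\<phi> U (relabel A (place U) x) y))))
          else return_pmf None)) (Some (\<phi> U a b))"
    (is "?lhs \<le> pmf (bind_pmf _ ?K) ?z")
proof -
  define m where "m = card U"
  have fU: "finite U" using U finite_subset by blast
  have mn: "m \<le> n" unfolding m_def using card_mono[OF _ U] by simp
  define \<sigma> where "\<sigma> = place U"
  have bs: "bij_betw \<sigma> {1..m} U" unfolding \<sigma>_def m_def by (rule place_bij[OF fU])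
  define \<tau> where "\<tau> = inv_into {1..m} \<sigma>"
  have bt: "bij_betw \<tau> U {1..m}" unfolding \<tau>_def using bs by (rule bij_betw_inv_into)
  define a0 where "a0 = relabel A \<tau> a"
  have a0: "a0 \<in> structs A {1..m}" "weight A a0 = weight A a"
    unfolding a0_def using ws_relabel[OF SA fU bt a] by auto
  have a0a: "relabel A \<sigma> a0 = a"
  proof -
    have "relabel A \<sigma> a0 = relabel A (\<sigma> \<circ> \<tau>) a" unfolding a0_def by (rule ws_comp[OF SA fU bt bs a])
    also have "\<dots> = a"
    proof (rule ws_id[OF SA fU a])
      fix i assume "i \<in> U" then show "(\<sigma> \<circ> \<tau>) i = i"
        using bs unfolding \<tau>_def bij_betw_def by (simp add: f_inv_into_f)
    qed
    finally show ?thesis .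
  qed
  define SS where "SS = {U'. U' \<subseteq> {1..n} \<and> card U' = m}"
  have SSfin: "finite SS" unfolding SS_def by simp
  have USS: "U \<in> SS" unfolding SS_def m_def using U by simp
  have cSS: "card SS = n choose m" unfolding SS_def using n_subsets[of "{1..n}" m] by simp
  define W where "W = weighted_pmf (structs B ({1..n} - U)) (weight B)"
  have cD: "card ({1..n} - U) = n - m" unfolding m_def using U fU by (simp add: card_Diff_subset)
  have sW: "sum (weight B) (structs B ({1..n} - U)) = fact (n - m) * sp_coeff B (n - m)"
    using sum_weight_card[OF SB, of "{1..n} - U"] cD by simp
  have gp': "sp_coeff B (n - m) > 0" using gp m_def by simp
  have P3: "pmf W b = weight B b / (fact (n - m) * sp_coeff B (n - m))"
    unfolding W_def using b gp' sW
    by (subst pmf_weighted) (auto simp: ws_fin[OF SB] intro: ws_nonneg[OF SB])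
  have P2: "pmf (pmf_of_set SS) U = 1 / real (n choose m)"
    using USS SSfin cSS by (subst pmf_of_set) auto
  have P1: "pmf (boltzmann A \<rho>) (m, a0) = weight A a * \<rho> ^ m / (fact m * sp_val A \<rho>)"
    using pmf_boltzmann[OF SA r sm pos, of m a0] a0 by simp
  have K: "?K (m, a0) = bind_pmf (pmf_of_set SS) (\<lambda>U.
              bind_pmf (weighted_pmf (structs B ({1..n} - U)) (weight B)) (\<lambda>y.
                return_pmf (Some (\<phi> U (relabel A (place U) a0) y))))"
    using mn gp' unfolding SS_def by simp
  have "pmf (bind_pmf W (\<lambda>y. return_pmf (Some (\<phi> U a y)))) ?z \<ge> pmf W b * pmf (return_pmf (Some (\<phi> U a b))) ?z"
    by (rule pmf_bind_ge)
  then have i3: "pmf (bind_pmf W (\<lambda>y. return_pmf (Some (\<phi> U a y)))) ?z \<ge> pmf W b" by simp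
  have "pmf (?K (m, a0)) ?z \<ge> pmf (pmf_of_set SS) U * pmf (bind_pmf W (\<lambda>y. return_pmf (Some (\<phi> U a y)))) ?z"
    unfolding K using pmf_bind_ge[of "pmf_of_set SS" U "\<lambda>U. bind_pmf (weighted_pmf (structs B ({1..n} - U)) (weight B)) (\<lambda>y.
                return_pmf (Some (\<phi> U (relabel A (place U) a0) y)))" ?z] a0a unfolding W_def \<sigma>_def by simp
  then have i2: "pmf (?K (m, a0)) ?z \<ge> pmf (pmf_of_set SS) U * pmf W b"
    using mult_left_mono[OF i3 pmf_nonneg[of "pmf_of_set SS" U]] by linarith
  have i1: "pmf (bind_pmf (boltzmann A \<rho>) ?K) ?z \<ge> pmf (boltzmann A \<rho>) (m, a0) * pmf (?K (m, a0)) ?z"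
    by (rule pmf_bind_ge)
  have i12: "pmf (bind_pmf (boltzmann A \<rho>) ?K) ?z \<ge> pmf (boltzmann A \<rho>) (m, a0) * (pmf (pmf_of_set SS) U * pmf W b)"
    using i1 mult_left_mono[OF i2 pmf_nonneg[of "boltzmann A \<rho>" "(m, a0)"]] by linarith
  have fe: "fact m * fact (n - m) * real (n choose m) = (fact n :: real)"
    using binomial_fact_lemma[OF mn] by (metis of_nat_fact of_nat_mult)
  have "pmf (boltzmann A \<rho>) (m, a0) * (pmf (pmf_of_set SS) U * pmf W b)
      = weight A a * weight B b * \<rho> ^ m / (sp_val A \<rho> * (fact m * fact (n - m) * real (n choose m)) * sp_coeff B (n - m))"
    unfolding P1 P2 P3 by (simp add: field_simps)
  also have "\<dots> = ?lhs" unfolding fe by (simp add: m_def)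
  finally show ?thesis using i12 by simp
qed


lemma split3:
  fixes \<phi> :: "nat \<Rightarrow> real"
  assumes "2 * K < n"
  shows "(\<Sum>k\<le>n. \<phi> k) = (\<Sum>k\<le>K. \<phi> k) + (\<Sum>j\<le>K. \<phi> (n - j)) + (\<Sum>k\<le>n. if K < k \<and> k < n - K then \<phi> k else 0)"
proof -
  have "(\<Sum>k\<le>n. \<phi> k) = (\<Sum>k\<le>n. (if k \<le> K then \<phi> k else 0) + (if n - K \<le> k then \<phi> k else 0)
          + (if K < k \<and> k < n - K then \<phi> k else 0))"
    by (rule sum.cong) (use assms in auto)
  also have "\<dots> = (\<Sum>k\<le>n. if k \<le> K then \<phi> k else 0) + (\<Sum>k\<le>n. if n - K \<le> k then \<phi> k else 0)
          + (\<Sum>k\<le>n. if K < k \<and> k < n - K then \<phi> k else 0)"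
    by (simp add: sum.distrib)
  also have "(\<Sum>k\<le>n. if k \<le> K then \<phi> k else 0) = (\<Sum>k\<le>K. \<phi> k)"
  proof -
    have "(\<Sum>k\<le>n. if k \<le> K then \<phi> k else 0) = sum \<phi> {k \<in> {..n}. k \<le> K}"
      by (rule sum.inter_filter[symmetric]) simp
    also have "{k \<in> {..n}. k \<le> K} = {..K}" using assms by auto
    finally show ?thesis .
  qed
  also have "(\<Sum>k\<le>n. if n - K \<le> k then \<phi> k else 0) = (\<Sum>j\<le>K. \<phi> (n - j))"
  proof -
    have "(\<Sum>k\<le>n. if n - K \<le> k then \<phi> k else 0) = sum \<phi> {k \<in> {..n}. n - K \<le> k}"
      by (rule sum.inter_filter[symmetric]) simp
    also have "\<dots> = (\<Sum>j\<le>K. \<phi> (n - j))"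
      by (rule sum.reindex_bij_witness[of _ "\<lambda>k. n - k" "\<lambda>j. n - j"]) (use assms in auto)
    finally show ?thesis .
  qed
  finally show ?thesis .
qed

lemma lin2: fixes s G X :: real assumes "\<bar>s - G\<bar> < X" shows "2 * G - 2 * s < 2 * X"
  using assms by (simp add: abs_less_iff)

lemma lin5: fixes x1 x2 y1 y2 F G m e :: real
  assumes "\<bar>x1 - y1\<bar> < e / 5" "\<bar>x2 - y2\<bar> < e / 5" "\<bar>y1 - F\<bar> < e / 5" "\<bar>y2 - G\<bar> < e / 5" "0 \<le> m" "m \<le> e / 5"
  shows "\<bar>x1 + x2 + m - (F + G)\<bar> < e"
  using assms unfolding abs_less_iff by (elim conjE) (intro conjI; linarith)

locale subexp =
  fixes f g :: "nat \<Rightarrow> real" and \<rho> lam :: real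
  assumes f0: "\<And>n. f n \<ge> 0" and g0: "\<And>n. g n \<ge> 0"
    and fpos: "eventually (\<lambda>n. f n > 0) sequentially"
    and gpos: "eventually (\<lambda>n. g n > 0) sequentially"
    and rho: "\<rho> > 0"
    and ratio: "(\<lambda>n. g n / g (Suc n)) \<longlonglongrightarrow> \<rho>"
    and sumg: "summable (\<lambda>n. g n * \<rho> ^ n)"
    and conv: "(\<lambda>n. (\<Sum>i\<le>n. g i * g (n - i)) / g n) \<longlonglongrightarrow> 2 * (\<Sum>n. g n * \<rho> ^ n)"
    and lam: "lam > 0" and fg: "(\<lambda>n. f n / g n) \<longlonglongrightarrow> lam"
begin

definition "Gv = (\<Sum>n. g n * \<rho> ^ n)"
definition "Fv = (\<Sum>n. f n * \<rho> ^ n)"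
definition "h n = (\<Sum>k\<le>n. f k * g (n - k))"
definition "L = Fv + lam * Gv"
definition "Mfg K n = (\<Sum>k\<le>n. if K < k \<and> k < n - K then f k * g (n - k) else 0)"
definition "Mgg K n = (\<Sum>k\<le>n. if K < k \<and> k < n - K then g k * g (n - k) else 0)"

lemma gpos_shift: "eventually (\<lambda>n. g (n - m) > 0) sequentially"
proof -
  obtain N where N: "\<And>n. n \<ge> N \<Longrightarrow> g n > 0" using gpos by (auto simp: eventually_sequentially)
  show ?thesis unfolding eventually_sequentially by (rule exI[of _ "N + m"]) (auto intro: N)
qed

lemma fpos_shift: "eventually (\<lambda>n. f (n - m) > 0) sequentially"
proof -
  obtain N where N: "\<And>n. n \<ge> N \<Longrightarrow> f n > 0" using fpos by (auto simp: eventually_sequentially)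
  show ?thesis unfolding eventually_sequentially by (rule exI[of _ "N + m"]) (auto intro: N)
qed

lemma ratio_pow: "(\<lambda>n. g n / g (n + m)) \<longlonglongrightarrow> \<rho> ^ m"
proof (induction m)
  case 0
  have "eventually (\<lambda>n. 1 = g n / g (n + 0)) sequentially"
    using gpos by eventually_elim simp
  then show ?case using tendsto_const[of "1::real"] by (simp add: tendsto_cong)
next
  case (Suc m)
  have r: "(\<lambda>n. g (n + m) / g (Suc (n + m))) \<longlonglongrightarrow> \<rho>"
    using LIMSEQ_ignore_initial_segment[OF ratio, of m] by simp
  have "(\<lambda>n. (g n / g (n + m)) * (g (n + m) / g (Suc (n + m)))) \<longlonglongrightarrow> \<rho> ^ m * \<rho>"
    by (rule tendsto_mult[OF Suc r])
  moreover have "eventually (\<lambda>n. (g n / g (n + m)) * (g (n + m) / g (Suc (n + m))) = g n / g (n + Suc m)) sequentially"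
  proof -
    obtain N where N: "\<And>n. n \<ge> N \<Longrightarrow> g n > 0" using gpos by (auto simp: eventually_sequentially)
    show ?thesis unfolding eventually_sequentially
    proof (intro exI[of _ N] allI impI)
      fix n assume "N \<le> n"
      then have "g (n + m) > 0" "g (Suc (n + m)) > 0" by (auto intro: N)
      then show "(g n / g (n + m)) * (g (n + m) / g (Suc (n + m))) = g n / g (n + Suc m)"
        by (simp add: field_simps)
    qed
  qed
  ultimately show ?case by (simp add: Lim_transform_eventually mult.commute)
qed

lemma ratio_shift: "(\<lambda>n. g (n - m) / g n) \<longlonglongrightarrow> \<rho> ^ m"
  by (rule LIMSEQ_offset[where k=m]) (use ratio_pow[of m] in simp)

lemma fg_shift: "(\<lambda>n. f (n - m) / g n) \<longlonglongrightarrow> lam * \<rho> ^ m"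
proof -
  have a: "(\<lambda>n. f (n - m) / g (n - m)) \<longlonglongrightarrow> lam"
    by (rule LIMSEQ_offset[where k=m]) (use fg in simp)
  have "(\<lambda>n. (f (n - m) / g (n - m)) * (g (n - m) / g n)) \<longlonglongrightarrow> lam * \<rho> ^ m"
    by (rule tendsto_mult[OF a ratio_shift])
  moreover have "eventually (\<lambda>n. (f (n - m) / g (n - m)) * (g (n - m) / g n) = f (n - m) / g n) sequentially"
    using gpos_shift[of m] by eventually_elim simp
  ultimately show ?thesis by (rule Lim_transform_eventually)
qed

lemma f_le_Cg: obtains N1 where "\<And>k. k \<ge> N1 \<Longrightarrow> f k \<le> (lam + 1) * g k"
proof -
  have "eventually (\<lambda>k. f k / g k < lam + 1) sequentially"
    using fg by (rule order_tendstoD) simp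
  then have "eventually (\<lambda>k. f k \<le> (lam + 1) * g k) sequentially"
    using gpos by eventually_elim (simp add: divide_less_eq)
  then show ?thesis using that by (auto simp: eventually_sequentially)
qed

lemma sumf: "summable (\<lambda>n. f n * \<rho> ^ n)"
proof -
  obtain N1 where N1: "\<And>k. k \<ge> N1 \<Longrightarrow> f k \<le> (lam + 1) * g k" using f_le_Cg by blast
  show ?thesis
  proof (rule summable_comparison_test')
    show "summable (\<lambda>n. (lam + 1) * (g n * \<rho> ^ n))" by (rule summable_mult[OF sumg])
    fix n assume "N1 \<le> n"
    then show "norm (f n * \<rho> ^ n) \<le> (lam + 1) * (g n * \<rho> ^ n)"
      using N1[of n] f0[of n] rho by (simp add: abs_mult mult_right_mono)
  qed
qed

lemma Gv_pos: "Gv > 0"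
proof -
  obtain N where N: "g N > 0" using gpos by (auto simp: eventually_sequentially)
  have "g N * \<rho> ^ N \<le> Gv" unfolding Gv_def
    using sum_le_suminf[OF sumg, of "{N}"] g0 rho by auto
  moreover have "g N * \<rho> ^ N > 0" using N rho by simp
  ultimately show ?thesis by linarith
qed

lemma Fv_pos: "Fv > 0"
proof -
  obtain N where N: "f N > 0" using fpos by (auto simp: eventually_sequentially)
  have "f N * \<rho> ^ N \<le> Fv" unfolding Fv_def
    using sum_le_suminf[OF sumf, of "{N}"] f0 rho by auto
  moreover have "f N * \<rho> ^ N > 0" using N rho by simp
  ultimately show ?thesis by linarith
qed

lemma L_pos: "L > 0" unfolding L_def using Fv_pos Gv_pos lam by (simp add: add_pos_pos)

lemma GK: "(\<lambda>K. \<Sum>k\<le>K. g k * \<rho> ^ k) \<longlonglongrightarrow> Gv"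
  unfolding Gv_def by (rule summable_LIMSEQ'[OF sumg])

lemma FK: "(\<lambda>K. \<Sum>k\<le>K. f k * \<rho> ^ k) \<longlonglongrightarrow> Fv"
  unfolding Fv_def by (rule summable_LIMSEQ'[OF sumf])

lemma limA: "(\<lambda>n. (\<Sum>k\<le>K. g k * g (n - k)) / g n) \<longlonglongrightarrow> (\<Sum>k\<le>K. g k * \<rho> ^ k)"
proof -
  have "(\<lambda>n. \<Sum>k\<le>K. g k * (g (n - k) / g n)) \<longlonglongrightarrow> (\<Sum>k\<le>K. g k * \<rho> ^ k)"
    by (intro tendsto_sum tendsto_mult_left ratio_shift)
  then show ?thesis by (simp add: sum_divide_distrib)
qed

lemma limF1: "(\<lambda>n. (\<Sum>k\<le>K. f k * g (n - k)) / g n) \<longlonglongrightarrow> (\<Sum>k\<le>K. f k * \<rho> ^ k)"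
proof -
  have "(\<lambda>n. \<Sum>k\<le>K. f k * (g (n - k) / g n)) \<longlonglongrightarrow> (\<Sum>k\<le>K. f k * \<rho> ^ k)"
    by (intro tendsto_sum tendsto_mult_left ratio_shift)
  then show ?thesis by (simp add: sum_divide_distrib)
qed

lemma limF2: "(\<lambda>n. (\<Sum>k\<le>K. f (n - k) * g k) / g n) \<longlonglongrightarrow> lam * (\<Sum>k\<le>K. g k * \<rho> ^ k)"
proof -
  have "(\<lambda>n. \<Sum>k\<le>K. g k * (f (n - k) / g n)) \<longlonglongrightarrow> (\<Sum>k\<le>K. g k * (lam * \<rho> ^ k))"
    by (intro tendsto_sum tendsto_mult_left fg_shift)
  then show ?thesis by (simp add: sum_divide_distrib sum_distrib_left algebra_simps)
qed

lemma mid_gg_lim: "(\<lambda>n. Mgg K n / g n) \<longlonglongrightarrow> 2 * Gv - 2 * (\<Sum>k\<le>K. g k * \<rho> ^ k)"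
proof -
  have "(\<lambda>n. (\<Sum>i\<le>n. g i * g (n - i)) / g n - 2 * ((\<Sum>k\<le>K. g k * g (n - k)) / g n))
      \<longlonglongrightarrow> 2 * Gv - 2 * (\<Sum>k\<le>K. g k * \<rho> ^ k)"
    unfolding Gv_def by (intro tendsto_diff tendsto_mult_left conv limA)
  moreover have "eventually (\<lambda>n. (\<Sum>i\<le>n. g i * g (n - i)) / g n - 2 * ((\<Sum>k\<le>K. g k * g (n - k)) / g n)
      = Mgg K n / g n) sequentially"
    unfolding eventually_sequentially
  proof (intro exI[of _ "2 * K + 1"] allI impI)
    fix n assume n: "2 * K + 1 \<le> n"
    have s: "(\<Sum>i\<le>n. g i * g (n - i)) = (\<Sum>k\<le>K. g k * g (n - k)) + (\<Sum>j\<le>K. g (n - j) * g (n - (n - j))) + Mgg K n"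
      unfolding Mgg_def by (rule split3) (use n in simp)
    have "(\<Sum>j\<le>K. g (n - j) * g (n - (n - j))) = (\<Sum>k\<le>K. g k * g (n - k))"
      by (rule sum.cong) (use n in auto)
    then show "(\<Sum>i\<le>n. g i * g (n - i)) / g n - 2 * ((\<Sum>k\<le>K. g k * g (n - k)) / g n) = Mgg K n / g n"
      using s by (simp add: add_divide_distrib)
  qed
  ultimately show ?thesis by (rule Lim_transform_eventually)
qed

lemma mid_le: assumes "\<And>k. k \<ge> N1 \<Longrightarrow> f k \<le> (lam + 1) * g k" "K \<ge> N1"
  shows "Mfg K n \<le> (lam + 1) * Mgg K n"
  unfolding Mfg_def Mgg_def sum_distrib_left
proof (rule sum_mono)
  fix k assume "k \<in> {..n}"
  show "(if K < k \<and> k < n - K then f k * g (n - k) else 0) \<le> (lam + 1) * (if K < k \<and> k < n - K then g k * g (n - k) else 0)"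
    using mult_right_mono[OF assms(1)[of k] g0[of "n - k"]] assms(2) by (auto simp: mult.assoc)
qed

lemma Mgg_nonneg: "Mgg K n \<ge> 0" unfolding Mgg_def using g0 by (auto intro!: sum_nonneg)
lemma Mfg_nonneg: "Mfg K n \<ge> 0" unfolding Mfg_def using f0 g0 by (auto intro!: sum_nonneg)

lemma mid_small:
  assumes e: "e > 0"
  obtains K where "eventually (\<lambda>n. Mfg K n \<le> e * g n) sequentially"
    and "\<And>K'. K' \<ge> K \<Longrightarrow> eventually (\<lambda>n. Mfg K' n \<le> e * g n) sequentially"
proof -
  obtain N1 where N1: "\<And>k. k \<ge> N1 \<Longrightarrow> f k \<le> (lam + 1) * g k" using f_le_Cg by blast
  have C: "lam + 1 > 0" using lam by simp
  have "eventually (\<lambda>K. dist (\<Sum>k\<le>K. g k * \<rho> ^ k) Gv < e / (4 * (lam + 1))) sequentially"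
    using tendstoD[OF GK, of "e / (4 * (lam + 1))"] e C by simp
  then obtain K0 where K0: "\<And>K. K \<ge> K0 \<Longrightarrow> dist (\<Sum>k\<le>K. g k * \<rho> ^ k) Gv < e / (4 * (lam + 1))"
    by (auto simp: eventually_sequentially)
  have main: "eventually (\<lambda>n. Mfg K' n \<le> e * g n) sequentially" if KK': "K' \<ge> max K0 N1" for K'
  proof -
    have n1: "N1 \<le> K'" using KK' by simp
    define X where "X = e / (4 * (lam + 1))"
    have a: "\<bar>(\<Sum>k\<le>K'. g k * \<rho> ^ k) - Gv\<bar> < X"
      using K0[of K'] KK' by (auto simp: dist_real_def X_def)
    have b: "e / (2 * (lam + 1)) = 2 * X" unfolding X_def using C by (simp add: field_simps)
    have d: "2 * Gv - 2 * (\<Sum>k\<le>K'. g k * \<rho> ^ k) < e / (2 * (lam + 1))"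
      unfolding b using lin2[OF a] .
    have "eventually (\<lambda>n. Mgg K' n / g n < e / (lam + 1)) sequentially"
    proof (rule order_tendstoD(2)[OF mid_gg_lim])
      show "2 * Gv - 2 * (\<Sum>k\<le>K'. g k * \<rho> ^ k) < e / (lam + 1)"
      proof -
        have "e / (lam + 1) = 4 * X" unfolding X_def using C by (simp add: field_simps)
        moreover have "X > 0" unfolding X_def using e C by simp
        moreover have "2 * Gv - 2 * (\<Sum>k\<le>K'. g k * \<rho> ^ k) < 2 * X" using lin2[OF a] .
        ultimately show ?thesis by simp
      qed
    qed
    then show ?thesis using gpos
    proof eventually_elim
      case (elim n)
      then have "Mgg K' n < e / (lam + 1) * g n" by (simp add: divide_less_eq)
      then have "(lam + 1) * Mgg K' n \<le> e * g n" using C by (simp add: field_simps)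
      moreover have "Mfg K' n \<le> (lam + 1) * Mgg K' n" by (rule mid_le[OF N1 n1])
      ultimately show ?case by linarith
    qed
  qed
  show ?thesis by (rule that[of "max K0 N1"]) (auto intro: main)
qed

lemma h_split:
  assumes "2 * K < n"
  shows "h n = (\<Sum>k\<le>K. f k * g (n - k)) + (\<Sum>k\<le>K. f (n - k) * g k) + Mfg K n"
proof -
  have "h n = (\<Sum>k\<le>K. f k * g (n - k)) + (\<Sum>j\<le>K. f (n - j) * g (n - (n - j))) + Mfg K n"
    unfolding h_def Mfg_def by (rule split3[OF assms])
  moreover have "(\<Sum>j\<le>K. f (n - j) * g (n - (n - j))) = (\<Sum>k\<le>K. f (n - k) * g k)"
    by (rule sum.cong) (use assms in auto)
  ultimately show ?thesis by simp
qed

lemma h_lim: "(\<lambda>n. h n / g n) \<longlonglongrightarrow> L"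
proof (rule tendstoI)
  fix e :: real assume e: "e > 0"
  obtain K1 where K1: "\<And>K'. K' \<ge> K1 \<Longrightarrow> eventually (\<lambda>n. Mfg K' n \<le> (e / 5) * g n) sequentially"
    using mid_small[of "e / 5"] e by auto
  have "eventually (\<lambda>K. dist (\<Sum>k\<le>K. f k * \<rho> ^ k) Fv < e / 5) sequentially"
    using tendstoD[OF FK, of "e / 5"] e by simp
  moreover have "eventually (\<lambda>K. dist (\<Sum>k\<le>K. g k * \<rho> ^ k) Gv < e / (5 * lam)) sequentially"
    using tendstoD[OF GK, of "e / (5 * lam)"] e lam by simp
  moreover have "eventually (\<lambda>K. K \<ge> K1) sequentially" by simp
  ultimately have "eventually (\<lambda>K. dist (\<Sum>k\<le>K. f k * \<rho> ^ k) Fv < e / 5 \<and>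
      dist (\<Sum>k\<le>K. g k * \<rho> ^ k) Gv < e / (5 * lam) \<and> K \<ge> K1) sequentially"
    by eventually_elim auto
  then obtain K where KF: "dist (\<Sum>k\<le>K. f k * \<rho> ^ k) Fv < e / 5"
    and KG: "dist (\<Sum>k\<le>K. g k * \<rho> ^ k) Gv < e / (5 * lam)" and KK: "K \<ge> K1"
    by (auto simp: eventually_sequentially)
  have KG': "lam * dist (\<Sum>k\<le>K. g k * \<rho> ^ k) Gv < e / 5"
    using KG lam by (simp add: field_simps)
  have e1: "eventually (\<lambda>n. dist ((\<Sum>k\<le>K. f k * g (n - k)) / g n) (\<Sum>k\<le>K. f k * \<rho> ^ k) < e / 5) sequentially"
    using tendstoD[OF limF1[of K], of "e / 5"] e by simp
  have e2: "eventually (\<lambda>n. dist ((\<Sum>k\<le>K. f (n - k) * g k) / g n) (lam * (\<Sum>k\<le>K. g k * \<rho> ^ k)) < e / 5) sequentially"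
    using tendstoD[OF limF2[of K], of "e / 5"] e by simp
  have e3: "eventually (\<lambda>n. 2 * K < n) sequentially" by (auto simp: eventually_sequentially intro: exI[of _ "2 * K + 1"])
  show "eventually (\<lambda>n. dist (h n / g n) L < e) sequentially"
    using e1 e2 e3 K1[OF KK] gpos
  proof eventually_elim
    case (elim n)
    have hs: "h n / g n = (\<Sum>k\<le>K. f k * g (n - k)) / g n + (\<Sum>k\<le>K. f (n - k) * g k) / g n + Mfg K n / g n"
      using h_split[OF elim(3)] by (simp add: add_divide_distrib)
    have m1: "Mfg K n / g n \<le> e / 5" using elim(4,5) by (simp add: divide_le_eq)
    have m0: "Mfg K n / g n \<ge> 0" using Mfg_nonneg elim(5) by simp
    have "lam * (\<Sum>k\<le>K. g k * \<rho> ^ k) - lam * Gv = lam * ((\<Sum>k\<le>K. g k * \<rho> ^ k) - Gv)" by (simp add: algebra_simps)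
    then have t2: "\<bar>lam * (\<Sum>k\<le>K. g k * \<rho> ^ k) - lam * Gv\<bar> < e / 5"
      using KG' lam by (simp add: dist_real_def abs_mult)
    show ?case using lin5[OF elim(1,2)[unfolded dist_real_def] KF[unfolded dist_real_def] t2 m0 m1]
      unfolding hs L_def dist_real_def .
  qed
qed

end


lemma prod_structs_Sigma: "prod_structs F G U = Sigma (Pow U) (\<lambda>U1. structs F U1 \<times> structs G (U - U1))"
  unfolding prod_structs_def by auto

lemma finite_prod_structs:
  assumes F: "is_wspecies F" and G: "is_wspecies G"
  shows "finite (prod_structs F G {1..n})"
  unfolding prod_structs_Sigma
  by (intro finite_SigmaI finite_cartesian_product ws_fin[OF F] ws_fin[OF G])
     (auto intro: finite_subset)

lemma prod_weight_nonneg: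
  assumes F: "is_wspecies F" and G: "is_wspecies G" and s: "s \<in> prod_structs F G {1..n}"
  shows "prod_weight F G s \<ge> 0"
proof -
  obtain U1 a b where s: "s = (U1, a, b)" "U1 \<subseteq> {1..n}" "a \<in> structs F U1" "b \<in> structs G ({1..n} - U1)"
    using s unfolding prod_structs_def by auto
  have "finite U1" using s(2) finite_subset by blast
  then show ?thesis unfolding prod_weight_def s(1)
    using ws_nonneg[OF F _ s(3)] ws_nonneg[OF G _ s(4)] by simp
qed

lemma tv_step:
  fixes F :: "'a wspecies" and G :: "'b wspecies"
  assumes F: "is_wspecies F" and G: "is_wspecies G" and r: "0 < \<rho>"
    and smF: "summable (\<lambda>k. sp_coeff F k * \<rho> ^ k)" and smG: "summable (\<lambda>k. sp_coeff G k * \<rho> ^ k)"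
    and Fv: "sp_val F \<rho> > 0" and Gv: "sp_val G \<rho> > 0" and lam: "lam > 0"
    and Hpos: "(\<Sum>k\<le>n. sp_coeff F k * sp_coeff G (n - k)) > 0"
    and gp: "\<And>m. m \<le> K \<Longrightarrow> sp_coeff G (n - m) > 0"
    and fp: "\<And>m. m \<le> K \<Longrightarrow> sp_coeff F (n - m) > 0"
    and e: "0 \<le> \<epsilon>"
    and mid: "(\<Sum>k\<le>n. if K < k \<and> k < n - K then sp_coeff F k * sp_coeff G (n - k) else 0)
              \<le> \<epsilon> * (\<Sum>k\<le>n. sp_coeff F k * sp_coeff G (n - k))"
    and r1: "\<And>m. m \<le> K \<Longrightarrow> (1 - \<epsilon>) * sp_coeff G (n - m) * sp_val F \<rho>
              \<le> sp_val F \<rho> / (sp_val F \<rho> + lam * sp_val G \<rho>) * \<rho> ^ m * (\<Sum>k\<le>n. sp_coeff F k * sp_coeff G (n - k))"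
    and r2: "\<And>m. m \<le> K \<Longrightarrow> (1 - \<epsilon>) * sp_coeff F (n - m) * sp_val G \<rho>
              \<le> (1 - sp_val F \<rho> / (sp_val F \<rho> + lam * sp_val G \<rho>)) * \<rho> ^ m * (\<Sum>k\<le>n. sp_coeff F k * sp_coeff G (n - k))"
  shows "tv_dist (map_pmf Some (S_rand F G n)) (S_hat F G \<rho> lam n) \<le> 2 * \<epsilon>"
proof -
  define H where "H = (\<Sum>k\<le>n. sp_coeff F k * sp_coeff G (n - k))"
  define p where "p = sp_val F \<rho> / (sp_val F \<rho> + lam * sp_val G \<rho>)"
  define PS where "PS = prod_structs F G {1..n}"
  define Good where "Good = {s \<in> PS. card (fst s) \<le> K \<or> n - K \<le> card (fst s)}"
  have lg: "lam * sp_val G \<rho> > 0" using lam Gv by simp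
  have p01: "0 \<le> p" "p \<le> 1" unfolding p_def using Fv lg by (auto simp: divide_le_eq_1)
  have finPS: "finite PS" unfolding PS_def by (rule finite_prod_structs[OF F G])
  have wnn: "\<And>s. s \<in> PS \<Longrightarrow> prod_weight F G s \<ge> 0" unfolding PS_def by (rule prod_weight_nonneg[OF F G])
  have totw: "(\<Sum>s\<in>PS. prod_weight F G s) = fact n * H"
    using prod_sum[OF F G, of "\<lambda>_. True" n] unfolding PS_def H_def by simp
  have totpos: "(\<Sum>s\<in>PS. prod_weight F G s) > 0" unfolding totw H_def using Hpos by simp
  have pmfP: "pmf (S_rand F G n) s = (if s \<in> PS then prod_weight F G s / (fact n * H) else 0)" for s
    unfolding S_rand_def PS_def[symmetric] using pmf_weighted[OF finPS wnn totpos] totw by simp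
  have pmfPS: "pmf (map_pmf Some (S_rand F G n)) (Some s) = pmf (S_rand F G n) s" for s
    by (rule pmf_map_inj') simp
  show ?thesis
  proof (rule tv_bound[where Gd="Some ` Good"])
    show "finite (Some ` Good)" using finPS unfolding Good_def by simp
    show "0 \<le> \<epsilon>" by (rule e)
    have "(\<Sum>x\<in>Some ` Good. pmf (map_pmf Some (S_rand F G n)) x) = (\<Sum>s\<in>Good. pmf (S_rand F G n) s)"
      by (subst sum.reindex) (auto simp: pmfPS)
    also have "\<dots> = (\<Sum>s\<in>Good. prod_weight F G s) / (fact n * H)"
      unfolding sum_divide_distrib by (rule sum.cong) (auto simp: pmfP Good_def)
    also have "(\<Sum>s\<in>Good. prod_weight F G s)
        = (\<Sum>s\<in>PS. if card (fst s) \<le> K \<or> n - K \<le> card (fst s) then prod_weight F G s else 0)"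
      unfolding Good_def using finPS by (simp add: sum.inter_filter)
    also have "\<dots> = fact n * (\<Sum>k\<le>n. if k \<le> K \<or> n - K \<le> k then sp_coeff F k * sp_coeff G (n - k) else 0)"
      unfolding PS_def by (rule prod_sum[OF F G])
    also have "(\<Sum>k\<le>n. if k \<le> K \<or> n - K \<le> k then sp_coeff F k * sp_coeff G (n - k) else 0)
        = H - (\<Sum>k\<le>n. if K < k \<and> k < n - K then sp_coeff F k * sp_coeff G (n - k) else 0)"
      unfolding H_def by (subst sum_subtractf[symmetric]) (rule sum.cong, auto)
    finally have "(\<Sum>x\<in>Some ` Good. pmf (map_pmf Some (S_rand F G n)) x)
        = (H - (\<Sum>k\<le>n. if K < k \<and> k < n - K then sp_coeff F k * sp_coeff G (n - k) else 0)) / H"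
      using Hpos unfolding H_def by simp
    moreover define M where "M = (\<Sum>k\<le>n. if K < k \<and> k < n - K then sp_coeff F k * sp_coeff G (n - k) else 0)"
    ultimately have S: "(\<Sum>x\<in>Some ` Good. pmf (map_pmf Some (S_rand F G n)) x) = (H - M) / H" by simp
    have Hp: "H > 0" using Hpos H_def by simp
    have "M / H \<le> \<epsilon>" using mid Hp unfolding M_def H_def[symmetric] by (simp add: divide_le_eq)
    moreover have "(H - M) / H = 1 - M / H" using Hp by (simp add: diff_divide_distrib)
    ultimately show "1 - \<epsilon> \<le> (\<Sum>x\<in>Some ` Good. pmf (map_pmf Some (S_rand F G n)) x)"
      unfolding S by linarith
  next
    fix x assume "x \<in> Some ` Good"
    then obtain U1 a b where x: "x = Some (U1, a, b)" and U1: "U1 \<subseteq> {1..n}" and a: "a \<in> structs F U1"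
      and b: "b \<in> structs G ({1..n} - U1)" and cK: "card U1 \<le> K \<or> n - K \<le> card U1"
      unfolding Good_def PS_def prod_structs_def by auto
    have inPS: "(U1, a, b) \<in> PS" unfolding PS_def prod_structs_def using U1 a b by simp
    define w where "w = weight F a * weight G b"
    have fU1: "finite U1" using U1 finite_subset by blast
    have w0: "w \<ge> 0" unfolding w_def using ws_nonneg[OF F fU1 a] ws_nonneg[OF G _ b] by simp
    have Px: "pmf (map_pmf Some (S_rand F G n)) x = w / (fact n * H)"
      unfolding x pmfPS pmfP using inPS by (simp add: prod_weight_def w_def)
    have Hp: "H > 0" using Hpos H_def by simp
    have Qbind: "pmf (S_hat F G \<rho> lam n) x \<ge> pmf (bernoulli_pmf p) c * pmf ((\<lambda>heads. if heads then
        bind_pmf (boltzmann F \<rho>) (\<lambda>(m, x).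
          if m \<le> n \<and> sp_coeff G (n - m) > 0 then
            bind_pmf (pmf_of_set {U. U \<subseteq> {1..n} \<and> card U = m}) (\<lambda>U.
              bind_pmf (weighted_pmf (structs G ({1..n} - U)) (weight G)) (\<lambda>y.
                return_pmf (Some (U, relabel F (place U) x, y))))
          else return_pmf None)
      else
        bind_pmf (boltzmann G \<rho>) (\<lambda>(m, y).
          if m \<le> n \<and> sp_coeff F (n - m) > 0 then
            bind_pmf (pmf_of_set {V. V \<subseteq> {1..n} \<and> card V = m}) (\<lambda>V.
              bind_pmf (weighted_pmf (structs F ({1..n} - V)) (weight F)) (\<lambda>x.
                return_pmf (Some ({1..n} - V, x, relabel G (place V) y))))
          else return_pmf None)) c) x" for c
      unfolding S_hat_def p_def by (rule pmf_bind_ge)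
    show "(1 - \<epsilon>) * pmf (map_pmf Some (S_rand F G n)) x \<le> pmf (S_hat F G \<rho> lam n) x"
    proof (cases "card U1 \<le> K")
      case True
      define m where "m = card U1"
      have gm: "sp_coeff G (n - card U1) > 0" using gp True by simp
      have lb: "w * \<rho> ^ card U1 / (sp_val F \<rho> * fact n * sp_coeff G (n - card U1)) \<le>
         pmf (bind_pmf (boltzmann F \<rho>) (\<lambda>(m, x).
          if m \<le> n \<and> sp_coeff G (n - m) > 0 then
            bind_pmf (pmf_of_set {U. U \<subseteq> {1..n} \<and> card U = m}) (\<lambda>U.
              bind_pmf (weighted_pmf (structs G ({1..n} - U)) (weight G)) (\<lambda>y.
                return_pmf (Some (U, relabel F (place U) x, y))))
          else return_pmf None)) x"
        using branch_lb[OF F G less_imp_le[OF r] smF Fv U1 a b gm, where \<phi>="\<lambda>U x y. (U, x, y)"]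
        unfolding x w_def by simp
      have Q1: "pmf (S_hat F G \<rho> lam n) x \<ge> p * (w * \<rho> ^ m / (sp_val F \<rho> * fact n * sp_coeff G (n - m)))"
        using Qbind[of True] mult_left_mono[OF lb p01(1)] p01 unfolding m_def by simp
      have R: "(1 - \<epsilon>) * sp_coeff G (n - m) * sp_val F \<rho> \<le> p * \<rho> ^ m * H"
        using r1[of m] True unfolding m_def p_def H_def by simp
      have gm': "sp_coeff G (n - m) > 0" using gm m_def by simp
      have "(1 - \<epsilon>) * (w / (fact n * H)) = (w / (fact n * H * sp_coeff G (n - m) * sp_val F \<rho>)) * ((1 - \<epsilon>) * sp_coeff G (n - m) * sp_val F \<rho>)"
        using gm' Fv Hp by (simp add: field_simps)
      also have "\<dots> \<le> (w / (fact n * H * sp_coeff G (n - m) * sp_val F \<rho>)) * (p * \<rho> ^ m * H)"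
        by (rule mult_left_mono[OF R]) (use w0 Hp gm' Fv in simp)
      also have "\<dots> = p * (w * \<rho> ^ m / (sp_val F \<rho> * fact n * sp_coeff G (n - m)))"
        using gm' Fv Hp by (simp add: field_simps)
      finally show ?thesis using Q1 Px by simp
    next
      case False
      then have cK2: "n - K \<le> card U1" using cK by simp
      define V where "V = {1..n} - U1"
      have cU1: "card U1 \<le> n" using card_mono[OF _ U1] by simp
      have cV: "card V = n - card U1" unfolding V_def using U1 fU1 by (simp add: card_Diff_subset)
      define m where "m = card V"
      have mK: "m \<le> K" unfolding m_def cV using cK2 by simp
      have nm: "n - m = card U1" unfolding m_def cV using cU1 by simp
      have VV: "V \<subseteq> {1..n}" unfolding V_def by auto
      have DV: "{1..n} - V = U1" unfolding V_def using U1 by auto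
      have fm: "sp_coeff F (n - card V) > 0" using fp[OF mK] m_def by simp
      have bV: "b \<in> structs G V" using b V_def by simp
      have aV: "a \<in> structs F ({1..n} - V)" using a DV by simp
      have lb: "weight G b * weight F a * \<rho> ^ card V / (sp_val G \<rho> * fact n * sp_coeff F (n - card V)) \<le>
         pmf (bind_pmf (boltzmann G \<rho>) (\<lambda>(m, y).
          if m \<le> n \<and> sp_coeff F (n - m) > 0 then
            bind_pmf (pmf_of_set {V. V \<subseteq> {1..n} \<and> card V = m}) (\<lambda>V.
              bind_pmf (weighted_pmf (structs F ({1..n} - V)) (weight F)) (\<lambda>x.
                return_pmf (Some ({1..n} - V, x, relabel G (place V) y))))
          else return_pmf None)) (Some ({1..n} - V, a, b))"
        using branch_lb[OF G F less_imp_le[OF r] smG Gv VV bV aV fm, where \<phi>="\<lambda>V y x. ({1..n} - V, x, y)"]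
        by simp
      then have lb': "w * \<rho> ^ m / (sp_val G \<rho> * fact n * sp_coeff F (n - m)) \<le>
         pmf (bind_pmf (boltzmann G \<rho>) (\<lambda>(m, y).
          if m \<le> n \<and> sp_coeff F (n - m) > 0 then
            bind_pmf (pmf_of_set {V. V \<subseteq> {1..n} \<and> card V = m}) (\<lambda>V.
              bind_pmf (weighted_pmf (structs F ({1..n} - V)) (weight F)) (\<lambda>x.
                return_pmf (Some ({1..n} - V, x, relabel G (place V) y))))
          else return_pmf None)) x"
        unfolding x DV w_def m_def by (simp add: mult.commute)
      have p1: "0 \<le> 1 - p" using p01 by simp
      have Q1: "pmf (S_hat F G \<rho> lam n) x \<ge> (1 - p) * (w * \<rho> ^ m / (sp_val G \<rho> * fact n * sp_coeff F (n - m)))"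
        using Qbind[of False] mult_left_mono[OF lb' p1] p01 by simp
      have R: "(1 - \<epsilon>) * sp_coeff F (n - m) * sp_val G \<rho> \<le> (1 - p) * \<rho> ^ m * H"
        using r2[OF mK] unfolding p_def H_def by simp
      have fm': "sp_coeff F (n - m) > 0" using fm m_def by simp
      have "(1 - \<epsilon>) * (w / (fact n * H)) = (w / (fact n * H * sp_coeff F (n - m) * sp_val G \<rho>)) * ((1 - \<epsilon>) * sp_coeff F (n - m) * sp_val G \<rho>)"
        using fm' Gv Hp by (simp add: field_simps)
      also have "\<dots> \<le> (w / (fact n * H * sp_coeff F (n - m) * sp_val G \<rho>)) * ((1 - p) * \<rho> ^ m * H)"
        by (rule mult_left_mono[OF R]) (use w0 Hp fm' Gv in simp)
      also have "\<dots> = (1 - p) * (w * \<rho> ^ m / (sp_val G \<rho> * fact n * sp_coeff F (n - m)))"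
        using fm' Gv Hp by (simp add: field_simps)
      finally show ?thesis using Q1 Px by simp
    qed
  qed
qed


lemma ratio_ineq:
  fixes R c x y gn :: real
  assumes "1 - \<epsilon> < R" "R = c * (x / gn) / (y * (z / gn))" "gn > 0" "z > 0" "y > 0"
  shows "(1 - \<epsilon>) * z * y \<le> c * x"
proof -
  have "R * (y * z) = c * x" using assms(2-5) by (simp add: field_simps)
  moreover have "(1 - \<epsilon>) * (y * z) \<le> R * (y * z)"
    using assms(1,4,5) by (intro mult_right_mono) auto
  ultimately show ?thesis by (simp add: algebra_simps)
qed

theorem proposition5:
  fixes F :: "'a wspecies" and G :: "'b wspecies" and \<rho> lam :: real
  assumes "is_wspecies F" and "is_wspecies G"
    and "eventually (\<lambda>n. sp_coeff F n > 0) sequentially"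
    and "eventually (\<lambda>n. sp_coeff G n > 0) sequentially"
    and "0 < \<rho>" and "conv_radius (sp_coeff G) = ereal \<rho>"
    and "(\<lambda>n. sp_coeff G n / sp_coeff G (Suc n)) \<longlonglongrightarrow> \<rho>"
    and "summable (\<lambda>n. sp_coeff G n * \<rho> ^ n)"
    and "(\<lambda>n. (\<Sum>i\<le>n. sp_coeff G i * sp_coeff G (n - i)) / sp_coeff G n)
           \<longlonglongrightarrow> 2 * sp_val G \<rho>"
    and "0 < lam" and "(\<lambda>n. sp_coeff F n / sp_coeff G n) \<longlonglongrightarrow> lam"
  shows "((\<lambda>n. prod_coeff F G n) \<sim>[sequentially]
           (\<lambda>n. sp_val F \<rho> * sp_coeff G n + sp_val G \<rho> * sp_coeff F n)) \<and>
         ((\<lambda>n. tv_dist (map_pmf Some (S_rand F G n)) (S_hat F G \<rho> lam n)) \<longlonglongrightarrow> 0)"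
proof -
  note FS = assms(1) and GS = assms(2)
  have inst: "subexp (sp_coeff F) (sp_coeff G) \<rho> lam"
  proof (unfold_locales)
    show "\<And>n. 0 \<le> sp_coeff F n" by (rule sp_coeff_nonneg[OF FS])
    show "\<And>n. 0 \<le> sp_coeff G n" by (rule sp_coeff_nonneg[OF GS])
    show "(\<lambda>n. (\<Sum>i\<le>n. sp_coeff G i * sp_coeff G (n - i)) / sp_coeff G n) \<longlonglongrightarrow> 2 * (\<Sum>n. sp_coeff G n * \<rho> ^ n)"
      using assms(9) unfolding sp_val_def .
  qed (use assms in auto)
  interpret S: subexp "sp_coeff F" "sp_coeff G" \<rho> lam by (rule inst)
  have Fv: "sp_val F \<rho> = S.Fv" unfolding sp_val_def S.Fv_def ..
  have Gv: "sp_val G \<rho> = S.Gv" unfolding sp_val_def S.Gv_def ..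
  have pc: "prod_coeff F G n = S.h n" for n
    using prod_sum[OF FS GS, of "\<lambda>_. True" n] unfolding prod_coeff_def S.h_def by simp
  have Lpos: "S.L > 0" by (rule S.L_pos)
  have LL: "S.L = S.Fv + S.Gv * lam" unfolding S.L_def by simp
  have part1: "(\<lambda>n. prod_coeff F G n) \<sim>[sequentially]
           (\<lambda>n. sp_val F \<rho> * sp_coeff G n + sp_val G \<rho> * sp_coeff F n)"
  proof (rule asymp_equivI')
    have "(\<lambda>n. (S.h n / sp_coeff G n) / (S.Fv + S.Gv * (sp_coeff F n / sp_coeff G n)))
        \<longlonglongrightarrow> S.L / (S.Fv + S.Gv * lam)"
      using Lpos LL by (intro tendsto_intros S.h_lim S.fg) auto
    then have lim: "(\<lambda>n. (S.h n / sp_coeff G n) / (S.Fv + S.Gv * (sp_coeff F n / sp_coeff G n))) \<longlonglongrightarrow> 1"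
      using Lpos LL by simp
    have "eventually (\<lambda>n. (S.h n / sp_coeff G n) / (S.Fv + S.Gv * (sp_coeff F n / sp_coeff G n))
        = prod_coeff F G n / (sp_val F \<rho> * sp_coeff G n + sp_val G \<rho> * sp_coeff F n)) sequentially"
      using S.gpos
    proof eventually_elim
      case (elim n)
      have "S.Fv * sp_coeff G n + S.Gv * sp_coeff F n > 0"
        using S.Fv_pos elim sp_coeff_nonneg[OF FS, of n] S.Gv_pos
        by (simp add: add_pos_nonneg)
      then show ?case unfolding pc Fv Gv using elim by (simp add: field_simps)
    qed
    then show "(\<lambda>n. prod_coeff F G n / (sp_val F \<rho> * sp_coeff G n + sp_val G \<rho> * sp_coeff F n)) \<longlonglongrightarrow> 1"
      using lim by (rule Lim_transform_eventually[rotated])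
  qed
  have part2: "(\<lambda>n. tv_dist (map_pmf Some (S_rand F G n)) (S_hat F G \<rho> lam n)) \<longlonglongrightarrow> 0"
  proof (rule tendstoI)
    fix e :: real assume e: "e > 0"
    define \<epsilon> where "\<epsilon> = e / 4"
    have \<epsilon>: "\<epsilon> > 0" unfolding \<epsilon>_def using e by simp
    define p where "p = sp_val F \<rho> / (sp_val F \<rho> + lam * sp_val G \<rho>)"
    have pL: "p = S.Fv / S.L" unfolding p_def Fv Gv S.L_def ..
    have p1L: "1 - p = lam * S.Gv / S.L" unfolding pL using Lpos unfolding S.L_def by (simp add: field_simps)
    obtain K where evM: "eventually (\<lambda>n. S.Mfg K n \<le> (\<epsilon> * S.L / 2) * sp_coeff G n) sequentially"
      using S.mid_small[of "\<epsilon> * S.L / 2"] \<epsilon> Lpos by auto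
    have evH: "eventually (\<lambda>n. S.h n / sp_coeff G n > S.L / 2) sequentially"
      using S.h_lim by (rule order_tendstoD) (use Lpos in simp)
    have evR1: "eventually (\<lambda>n. \<forall>m\<in>{..K}. 1 - \<epsilon> < p * \<rho> ^ m * (S.h n / sp_coeff G n) / (S.Fv * (sp_coeff G (n - m) / sp_coeff G n))) sequentially"
    proof (rule eventually_ball_finite, simp, intro ballI)
      fix m assume "m \<in> {..K}"
      have "(\<lambda>n. p * \<rho> ^ m * (S.h n / sp_coeff G n) / (S.Fv * (sp_coeff G (n - m) / sp_coeff G n)))
          \<longlonglongrightarrow> p * \<rho> ^ m * S.L / (S.Fv * \<rho> ^ m)"
        using S.Fv_pos assms(5) by (intro tendsto_intros S.h_lim S.ratio_shift) auto
      moreover have "p * \<rho> ^ m * S.L / (S.Fv * \<rho> ^ m) = 1"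
        unfolding pL using Lpos S.Fv_pos assms(5) by (simp add: field_simps)
      ultimately show "eventually (\<lambda>n. 1 - \<epsilon> < p * \<rho> ^ m * (S.h n / sp_coeff G n) / (S.Fv * (sp_coeff G (n - m) / sp_coeff G n))) sequentially"
        using \<epsilon> by (intro order_tendstoD(1)) auto
    qed
    have evR2: "eventually (\<lambda>n. \<forall>m\<in>{..K}. 1 - \<epsilon> < (1 - p) * \<rho> ^ m * (S.h n / sp_coeff G n) / (S.Gv * (sp_coeff F (n - m) / sp_coeff G n))) sequentially"
    proof (rule eventually_ball_finite, simp, intro ballI)
      fix m assume "m \<in> {..K}"
      have "(\<lambda>n. (1 - p) * \<rho> ^ m * (S.h n / sp_coeff G n) / (S.Gv * (sp_coeff F (n - m) / sp_coeff G n)))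
          \<longlonglongrightarrow> (1 - p) * \<rho> ^ m * S.L / (S.Gv * (lam * \<rho> ^ m))"
        using S.Gv_pos assms(5,10) by (intro tendsto_intros S.h_lim S.fg_shift) auto
      moreover have "(1 - p) * \<rho> ^ m * S.L / (S.Gv * (lam * \<rho> ^ m)) = 1"
        unfolding p1L using Lpos S.Gv_pos assms(5,10) by (simp add: field_simps)
      ultimately show "eventually (\<lambda>n. 1 - \<epsilon> < (1 - p) * \<rho> ^ m * (S.h n / sp_coeff G n) / (S.Gv * (sp_coeff F (n - m) / sp_coeff G n))) sequentially"
        using \<epsilon> by (intro order_tendstoD(1)) auto
    qed
    have evG: "eventually (\<lambda>n. \<forall>m\<in>{..K}. sp_coeff G (n - m) > 0) sequentially"
      by (rule eventually_ball_finite) (auto intro: S.gpos_shift)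
    have evF: "eventually (\<lambda>n. \<forall>m\<in>{..K}. sp_coeff F (n - m) > 0) sequentially"
      by (rule eventually_ball_finite) (auto intro: S.fpos_shift)
    have evK: "eventually (\<lambda>n. 2 * K < n) sequentially"
      by (auto simp: eventually_sequentially intro: exI[of _ "2 * K + 1"])
    show "eventually (\<lambda>n. dist (tv_dist (map_pmf Some (S_rand F G n)) (S_hat F G \<rho> lam n)) 0 < e) sequentially"
      using evM evH evR1 evR2 evG evF evK S.gpos
    proof eventually_elim
      case (elim n)
      have gn: "sp_coeff G n > 0" by (rule elim(8))
      have hgt: "S.h n > S.L / 2 * sp_coeff G n" using elim(2) gn by (simp add: field_simps)
      have hpos: "S.h n > 0" using hgt Lpos gn by (smt (verit) mult_pos_pos half_gt_zero)
      have mid: "S.Mfg K n \<le> \<epsilon> * S.h n"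
      proof -
        have "(\<epsilon> * S.L / 2) * sp_coeff G n = \<epsilon> * (S.L / 2 * sp_coeff G n)" by simp
        also have "\<dots> \<le> \<epsilon> * S.h n" using hgt \<epsilon> by simp
        finally show ?thesis using elim(1) by linarith
      qed
      have "tv_dist (map_pmf Some (S_rand F G n)) (S_hat F G \<rho> lam n) \<le> 2 * \<epsilon>"
      proof (rule tv_step[OF FS GS assms(5) S.sumf assms(8) _ _ assms(10), where K=K])
        show "0 < sp_val F \<rho>" using S.Fv_pos Fv by simp
        show "0 < sp_val G \<rho>" using S.Gv_pos Gv by simp
        show "0 < (\<Sum>k\<le>n. sp_coeff F k * sp_coeff G (n - k))" using hpos unfolding S.h_def .
        show "\<And>m. m \<le> K \<Longrightarrow> 0 < sp_coeff G (n - m)" using elim(5) by simp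
        show "\<And>m. m \<le> K \<Longrightarrow> 0 < sp_coeff F (n - m)" using elim(6) by simp
        show "0 \<le> \<epsilon>" using \<epsilon> by simp
        show "(\<Sum>k\<le>n. if K < k \<and> k < n - K then sp_coeff F k * sp_coeff G (n - k) else 0)
              \<le> \<epsilon> * (\<Sum>k\<le>n. sp_coeff F k * sp_coeff G (n - k))"
          using mid unfolding S.Mfg_def S.h_def .
        show "(1 - \<epsilon>) * sp_coeff G (n - m) * sp_val F \<rho>
              \<le> sp_val F \<rho> / (sp_val F \<rho> + lam * sp_val G \<rho>) * \<rho> ^ m * (\<Sum>k\<le>n. sp_coeff F k * sp_coeff G (n - k))"
          if m: "m \<le> K" for m
        proof -
          have "(1 - \<epsilon>) * sp_coeff G (n - m) * S.Fv \<le> p * \<rho> ^ m * S.h n"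
            by (rule ratio_ineq[where R="p * \<rho> ^ m * (S.h n / sp_coeff G n) / (S.Fv * (sp_coeff G (n - m) / sp_coeff G n))"])
             (use elim(3,5) m gn S.Fv_pos in auto)
          then show ?thesis unfolding p_def S.h_def Fv Gv .
        qed
        show "(1 - \<epsilon>) * sp_coeff F (n - m) * sp_val G \<rho>
              \<le> (1 - sp_val F \<rho> / (sp_val F \<rho> + lam * sp_val G \<rho>)) * \<rho> ^ m * (\<Sum>k\<le>n. sp_coeff F k * sp_coeff G (n - k))"
          if m: "m \<le> K" for m
        proof -
          have "(1 - \<epsilon>) * sp_coeff F (n - m) * S.Gv \<le> (1 - p) * \<rho> ^ m * S.h n"
            by (rule ratio_ineq[where R="(1 - p) * \<rho> ^ m * (S.h n / sp_coeff G n) / (S.Gv * (sp_coeff F (n - m) / sp_coeff G n))"])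
             (use elim(4,6) m gn S.Gv_pos in auto)
          then show ?thesis unfolding p_def S.h_def Fv Gv .
        qed
      qed
      moreover have "tv_dist (map_pmf Some (S_rand F G n)) (S_hat F G \<rho> lam n) \<ge> 0" by (rule tv_nonneg)
      ultimately show ?case unfolding \<epsilon>_def dist_real_def using e by simp
    qed
  qed
  show ?thesis using part1 part2 by simp
qed


end
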